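(* Let $\hat{\mathbb{K}}_0\subseteq\cdots\subseteq\hat{\mathbb{K}}_m$ be the filtration produced by the active small coning construction from a tower, presented as an input stream as described below, and run the streaming reduction algorithm described below on it. Then the algorithm computes the correct barcode: the reported pairs $(\ell,j)$ are exactly the pivot pairs (pivot row, column) of a reduction of the boundary matrix of the filtration (with simplices ordered as in the stream), i.e., the pairs given by the standard persistence algorithm.
   Context: Active small coning construction: from a tower of elementary inclusions ($\mathbb{K}_{i+1}=\mathbb{K}_i\cup\{\sigma\}$) and elementary contractions of two vertices, one builds $\hat{\mathbb{K}}_0=\emptyset\subseteq\hat{\mathbb{K}}_1\subseteq\cdots$, with vertices flagged active/inactive (a simplex is active iff all its vertices are); an inclusion adds $\sigma$ (new vertices active); a contraction of $u,v$ adds $\{\{v\}\cup\tau:\tau\in\mathrm{Act}\overline{\mathrm{St}}(u,\hat{\mathbb{K}}_i)\}$ and marks $u$ inactive if $|\mathrm{Act}\overline{\mathrm{St}}(u,\hat{\mathbb{K}}_i)|\le|\mathrm{Act}\overline{\mathrm{St}}(v,\hat{\mathbb{K}}_i)|$ (symmetric otherwise), where $\mathrm{Act}\overline{\mathrm{St}}(w,\hat{\mathbb{K}}_i)$ is the set of active simplices of $\hat{\mathbb{K}}_i$ in the closed star of $w$. Inactive vertices never gain new cofaces. Input stream: elements (ADDITION, $\sigma$, list of facets of $\sigma$) listing the simplices of $\hat{\mathbb{K}}_{i+1}\setminus\hat{\mathbb{K}}_i$ in increasing dimension for $i=0,1,\dots$, and elements (INACTIVE, $\sigma$) signalling that $\sigma$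 has become inactive; after such an element no later added simplex has $\sigma$ as a facet. Simplices are indexed by their position in the stream. Boundary matrix over $\mathbb{Z}_2$: column $j$ has a $1$ in row $i$ iff simplex $i$ is a facet of simplex $j$; the pivot of a nonzero column is its largest nonzero row index; a reduction is a matrix obtained by left-to-right column additions with no two nonzero columns sharing a pivot. A simplex is negative if its column in a reduction is nonzero, positive otherwise. Algorithm: keep a matrix $M$ as a dictionary of columns (sorted lists of row indices). Subroutine reduce_column($j$): delete from column $j$ each row index $i$ that is inactive and negative; then, while column $j$ is nonzero and its pivot equals the pivot of another column $k<j$ of $M$, add column $k$ to column $j$. Subroutine remove_row($\ell$): let $j$ be the column of $M$ with pivot $\ell$; for every other nonzero column $i$ of $M$ with a nonzero entry in row $\ell$, add column $j$ to column $i$; then remove column $j$ from $M$. Main loop: on (ADDITION, $j$, facets), insert column $j$ into $M$ and call reduce_column($j$); if column $j$ is zero remove it from $M$; otherwise, with pivot $\ell$, report $(\ell,j)$ and if $\ell$ is inactive call remove_row($\ell$). On (INACTIVE, $\ell$), if $\ell$ is the pivot of some column of $M$, call remove_row($\ell$). *)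

theory Defs
  imports Main "HOL-Library.While_Combinator"
begin

text \<open>Simplices are finite nonempty sets of vertices of type 'v.\<close>

datatype 'v tower_op = Incl "'v set" | Contr 'v 'v

text \<open>State: (tower complex K_i, coned complex Khat_i, set of active vertices).\<close>
type_synonym 'v cstate = "'v set set \<times> 'v set set \<times> 'v set"

definition is_facet :: "'v set \<Rightarrow> 'v set \<Rightarrow> bool" where
  "is_facet \<tau> \<sigma> \<longleftrightarrow> \<tau> \<noteq> {} \<and> \<tau> \<subseteq> \<sigma> \<and> finite \<sigma> \<and> card \<tau> + 1 = card \<sigma>"

definition is_active :: "'v set \<Rightarrow> 'v set \<Rightarrow> bool" where
  "is_active A \<sigma> \<longleftrightarrow> \<sigma> \<subseteq> A"

definition act_star :: "'v set set \<Rightarrow> 'v set \<Rightarrow> 'v \<Rightarrow> 'v set set" where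
  "act_star Kh A w = {\<tau> \<in> Kh. insert w \<tau> \<in> Kh \<and> is_active A \<tau>}"

text \<open>Validity of an elementary operation on the current tower complex K
  (elementary inclusion: sigma is new and all its facets are present; new vertices
  are fresh names; elementary contraction: two distinct vertices of K).\<close>
fun valid_op :: "'v cstate \<Rightarrow> 'v tower_op \<Rightarrow> bool" where
  "valid_op (K, Kh, A) (Incl \<sigma>) \<longleftrightarrow>
     finite \<sigma> \<and> \<sigma> \<noteq> {} \<and> \<sigma> \<notin> K \<and>
     (\<forall>\<tau>. is_facet \<tau> \<sigma> \<longrightarrow> \<tau> \<in> K) \<and>
     (\<forall>x\<in>\<sigma>. x \<notin> \<Union>K \<longrightarrow> x \<notin> \<Union>Kh)"
| "valid_op (K, Kh, A) (Contr u v) \<longleftrightarrow> u \<noteq> v \<and> {u} \<in> K \<and> {v} \<in> K"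

text \<open>For a contraction of u and v, the vertex a with the smaller active closed star
  (u in case of a tie) is coned to the other vertex b and becomes inactive; in the
  tower, a is mapped to b.\<close>
fun cstep :: "'v cstate \<Rightarrow> 'v tower_op \<Rightarrow> 'v cstate" where
  "cstep (K, Kh, A) (Incl \<sigma>) = (K \<union> {\<sigma>}, Kh \<union> {\<sigma>}, A \<union> (\<sigma> - \<Union>Kh))"
| "cstep (K, Kh, A) (Contr u v) =
     (let (a, b) = (if card (act_star Kh A u) \<le> card (act_star Kh A v) then (u, v) else (v, u))
      in ((\<lambda>\<tau>. (\<lambda>x. if x = a then b else x) ` \<tau>) ` K,
          Kh \<union> {insert b \<tau> | \<tau>. \<tau> \<in> act_star Kh A a},
          A - {a}))"

definition cstates :: "'v tower_op list \<Rightarrow> nat \<Rightarrow> 'v cstate" where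
  "cstates ops i = foldl cstep ({}, {}, {}) (take i ops)"

definition valid_tower :: "'v tower_op list \<Rightarrow> bool" where
  "valid_tower ops \<longleftrightarrow> (\<forall>i < length ops. valid_op (cstates ops i) (ops ! i))"

definition Khat :: "'v tower_op list \<Rightarrow> nat \<Rightarrow> 'v set set" where
  "Khat ops i = fst (snd (cstates ops i))"

definition Act :: "'v tower_op list \<Rightarrow> nat \<Rightarrow> 'v set" where
  "Act ops i = snd (snd (cstates ops i))"

text \<open>Simplices that become inactive during step i (including simplices that are
  inactive already when added).\<close>
definition newly_inactive :: "'v tower_op list \<Rightarrow> nat \<Rightarrow> 'v set set" where
  "newly_inactive ops i =
     {\<sigma> \<in> Khat ops (Suc i). \<not> is_active (Act ops (Suc i)) \<sigma> \<and>
        (\<sigma> \<notin> Khat ops i \<or> is_active (Act ops i) \<sigma>)}"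

datatype 'v lelem = LAdd "'v set" | LInact "'v set"

definition labelled_stream :: "'v tower_op list \<Rightarrow> 'v lelem list \<Rightarrow> bool" where
  "labelled_stream ops ls \<longleftrightarrow>
     (\<exists>adds inacts :: nat \<Rightarrow> 'v set list.
        (\<forall>i < length ops.
           distinct (adds i) \<and> set (adds i) = Khat ops (Suc i) - Khat ops i \<and>
           sorted (map card (adds i)) \<and>
           distinct (inacts i) \<and> set (inacts i) = newly_inactive ops i) \<and>
        ls = concat (map (\<lambda>i. map LAdd (adds i) @ map LInact (inacts i)) [0..<length ops]))"

text \<open>The input stream as seen by the algorithm; simplices are indexed by
  position in the stream.\<close>
datatype selem = ADDITION nat "nat list" | INACTIVE nat

definition stream_of :: "'v lelem list \<Rightarrow> selem list \<Rightarrow> bool" where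
  "stream_of ls str \<longleftrightarrow> length str = length ls \<and>
     (\<forall>p < length ls.
        (\<forall>\<sigma>. ls ! p = LAdd \<sigma> \<longrightarrow>
           (\<exists>fs. str ! p = ADDITION p fs \<and> distinct fs \<and>
                 set fs = {q. q < length ls \<and> (\<exists>\<tau>. ls ! q = LAdd \<tau> \<and> is_facet \<tau> \<sigma>)})) \<and>
        (\<forall>\<sigma>. ls ! p = LInact \<sigma> \<longrightarrow>
           (\<exists>q < length ls. ls ! q = LAdd \<sigma> \<and> str ! p = INACTIVE q)))"

text \<open>Matrices over Z_2 are given by their columns, each column being the set of
  rows with a nonzero entry.\<close>
definition boundary :: "'v lelem list \<Rightarrow> nat \<Rightarrow> nat set" where
  "boundary ls j = {i. i < length ls \<and> j < length ls \<and>
      (\<exists>\<tau> \<sigma>. ls ! i = LAdd \<tau> \<and> ls ! j = LAdd \<sigma> \<and> is_facet \<tau> \<sigma>)}"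

definition zsum :: "nat set \<Rightarrow> (nat \<Rightarrow> nat set) \<Rightarrow> nat set" where
  "zsum S C = {i. odd (card {k \<in> S. i \<in> C k})}"

definition pivot :: "nat set \<Rightarrow> nat" where
  "pivot c = Max c"

definition is_reduction :: "nat \<Rightarrow> (nat \<Rightarrow> nat set) \<Rightarrow> (nat \<Rightarrow> nat set) \<Rightarrow> bool" where
  "is_reduction N D R \<longleftrightarrow>
     (\<forall>j < N. \<exists>S. S \<subseteq> {..<j} \<and> R j = D j \<union> zsum S D - (D j \<inter> zsum S D)) \<and>
     (\<forall>j < N. \<forall>k < N. j \<noteq> k \<and> R j \<noteq> {} \<and> R k \<noteq> {} \<longrightarrow> pivot (R j) \<noteq> pivot (R k))"

definition pivot_pairs :: "nat \<Rightarrow> (nat \<Rightarrow> nat set) \<Rightarrow> (nat \<times> nat) set" where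
  "pivot_pairs N R = {(pivot (R j), j) | j. j < N \<and> R j \<noteq> {}}"

type_synonym matrix = "nat \<Rightarrow> nat set option"

definition zadd :: "nat set \<Rightarrow> nat set \<Rightarrow> nat set" where
  "zadd a b = (a - b) \<union> (b - a)"

definition has_pivot :: "matrix \<Rightarrow> nat \<Rightarrow> nat \<Rightarrow> bool" where
  "has_pivot M k l \<longleftrightarrow> (\<exists>c. M k = Some c \<and> c \<noteq> {} \<and> pivot c = l)"

text \<open>reduce_column(j) on the current content c of column j; Inact = simplices
  signalled inactive so far, Neg = simplices found negative so far.\<close>
definition reduce_column :: "matrix \<Rightarrow> nat set \<Rightarrow> nat set \<Rightarrow> nat \<Rightarrow> nat set \<Rightarrow> nat set" where
  "reduce_column M Inact Neg j c =
     while (\<lambda>c. c \<noteq> {} \<and> (\<exists>k < j. has_pivot M k (pivot c)))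
           (\<lambda>c. zadd c (the (M (SOME k. k < j \<and> has_pivot M k (pivot c)))))
           (c - (Inact \<inter> Neg))"

definition remove_row :: "matrix \<Rightarrow> nat \<Rightarrow> matrix" where
  "remove_row M l =
     (let j = (SOME j. has_pivot M j l); cj = the (M j) in
      (\<lambda>i. if i = j then None else
             (case M i of None \<Rightarrow> None
              | Some c \<Rightarrow> if c \<noteq> {} \<and> l \<in> c then Some (zadd c cj) else Some c)))"

text \<open>Algorithm state: matrix M, inactive indices, negative indices, reported pairs.\<close>
type_synonym astate = "matrix \<times> nat set \<times> nat set \<times> (nat \<times> nat) list"

fun process :: "astate \<Rightarrow> selem \<Rightarrow> astate" where
  "process (M, I, N, out) (ADDITION j fs) =
     (let c = reduce_column (M(j \<mapsto> set fs)) I N j (set fs) in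
      if c = {} then (M(j := None), I, N, out)
      else (let l = pivot c; M1 = M(j \<mapsto> c) in
            (if l \<in> I then remove_row M1 l else M1, I, insert j N, out @ [(l, j)])))"
| "process (M, I, N, out) (INACTIVE l) =
     (if (\<exists>j. has_pivot M j l) then remove_row M l else M, insert l I, N, out)"

definition run_algorithm :: "selem list \<Rightarrow> (nat \<times> nat) list" where
  "run_algorithm str = snd (snd (snd (foldl process (Map.empty, {}, {}, []) str)))"

end

theory Submission
  imports Defs
begin

lemma zadd_assoc: "zadd (zadd a b) c = zadd a (zadd b c)"
  unfolding zadd_def by blast

lemma zadd_comm: "zadd a b = zadd b a"
  unfolding zadd_def by blast

lemma odd_card_symdiff:
  assumes "finite A" "finite B"
  shows "odd (card ((A - B) \<union> (B - A))) \<longleftrightarrow> (odd (card A) \<noteq> odd (card B))"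
proof -
  have d: "(A - B) \<inter> (B - A) = {}" by blast
  have c1: "card (A - B) + card (A \<inter> B) = card A"
    using assms by (metis Diff_Diff_Int card_Diff_subset_Int finite_Int le_add_diff_inverse2 card_mono inf_le1 Int_commute add.commute)
  have c2: "card (B - A) + card (A \<inter> B) = card B"
    using assms by (metis Diff_Diff_Int card_Diff_subset_Int finite_Int le_add_diff_inverse2 card_mono inf_le1 Int_commute add.commute)
  have "card ((A - B) \<union> (B - A)) = card (A - B) + card (B - A)"
    using assms d by (simp add: card_Un_disjoint)
  then show ?thesis using c1 c2 by presburger
qed

lemma zsum_symdiff:
  assumes "finite S" "finite T"
  shows "zsum ((S - T) \<union> (T - S)) C = zadd (zsum S C) (zsum T C)"
proof -
  have "\<And>i. {k \<in> (S - T) \<union> (T - S). i \<in> C k} =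
      ({k \<in> S. i \<in> C k} - {k \<in> T. i \<in> C k}) \<union> ({k \<in> T. i \<in> C k} - {k \<in> S. i \<in> C k})"
    by blast
  then show ?thesis using assms
    unfolding zsum_def zadd_def by (auto simp: odd_card_symdiff)
qed

lemma zsum_empty[simp]: "zsum {} C = {}"
  unfolding zsum_def by simp

lemma zsum_single: "zsum {k} C = C k"
proof -
  have "\<And>i. {k' \<in> {k}. i \<in> C k'} = (if i \<in> C k then {k} else {})" by auto
  then show ?thesis unfolding zsum_def by auto
qed

definition span :: "(nat \<Rightarrow> nat set) \<Rightarrow> nat \<Rightarrow> nat set set" where
  "span D n = {zsum S D | S. S \<subseteq> {..<n}}"

lemma span_zadd: "x \<in> span D n \<Longrightarrow> y \<in> span D n \<Longrightarrow> zadd x y \<in> span D n"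
  unfolding span_def
proof clarify
  fix S T assume "S \<subseteq> {..<n}" "T \<subseteq> {..<n}"
  then have "finite S" "finite T" by (auto intro: finite_subset)
  then show "\<exists>U. zadd (zsum S D) (zsum T D) = zsum U D \<and> U \<subseteq> {..<n}"
    using \<open>S \<subseteq> _\<close> \<open>T \<subseteq> _\<close> by (intro exI[of _ "(S - T) \<union> (T - S)"]) (auto simp: zsum_symdiff)
qed

lemma span_mono: "x \<in> span D n \<Longrightarrow> n \<le> m \<Longrightarrow> x \<in> span D m"
proof -
  assume a: "x \<in> span D n" "n \<le> m"
  from a(1) obtain S where S: "S \<subseteq> {..<n}" "x = zsum S D" unfolding span_def by blast
  have "S \<subseteq> {..<m}" using S(1) a(2) by force
  then show ?thesis unfolding span_def using S(2) by blast
qed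

lemma span_gen: "k < n \<Longrightarrow> D k \<in> span D n"
  unfolding span_def by (intro CollectI exI[of _ "{k}"]) (auto simp: zsum_single)

lemma span_empty: "{} \<in> span D n"
  unfolding span_def by (intro CollectI exI[of _ "{}"]) auto

lemma zadd_max:
  assumes "finite a" "finite b" "a \<noteq> {}" "b \<noteq> {}" "Max a = Max b"
  shows "zadd a b = {} \<or> Max (zadd a b) < Max a"
proof -
  have sub: "zadd a b \<subseteq> {..<Max a}"
  proof
    fix x assume "x \<in> zadd a b"
    have ma: "Max a \<in> a" "Max a \<in> b" using assms Max_in[of a] Max_in[of b] by auto
    from \<open>x \<in> zadd a b\<close> have "x \<in> a \<or> x \<in> b" "x \<noteq> Max a"
      using ma unfolding zadd_def by auto
    moreover have "x \<le> Max a"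
    proof (cases "x \<in> a")
      case True then show ?thesis using assms(1) by simp
    next
      case False then have "x \<in> b" using \<open>x \<in> a \<or> x \<in> b\<close> by simp
      then show ?thesis using assms(2,5) by simp
    qed
    ultimately show "x \<in> {..<Max a}" by auto
  qed
  have "finite (zadd a b)" using assms unfolding zadd_def by auto
  show ?thesis
  proof (cases "zadd a b = {}")
    case False
    then have "Max (zadd a b) \<in> zadd a b" using \<open>finite (zadd a b)\<close> by (rule Max_in[rotated])
    then show ?thesis using sub by auto
  qed simp
qed


definition wr :: "matrix \<Rightarrow> nat \<Rightarrow> nat set \<Rightarrow> nat set" where
  "wr M j c0 = while (\<lambda>c. c \<noteq> {} \<and> (\<exists>k < j. has_pivot M k (pivot c)))
           (\<lambda>c. zadd c (the (M (SOME k. k < j \<and> has_pivot M k (pivot c))))) c0"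

lemma while_red:
  fixes M :: matrix and j :: nat and Q :: "nat set set"
  assumes fin: "\<And>k ck. k < j \<Longrightarrow> M k = Some ck \<Longrightarrow> finite ck"
    and cl: "\<And>x k ck. x \<in> Q \<Longrightarrow> finite x \<Longrightarrow> x \<noteq> {} \<Longrightarrow> k < j \<Longrightarrow> M k = Some ck \<Longrightarrow> ck \<noteq> {} \<Longrightarrow>
                pivot ck = pivot x \<Longrightarrow> zadd x ck \<in> Q"
    and init: "c0 \<in> Q" "finite c0"
  shows "wr M j c0 \<in> Q \<and> finite (wr M j c0) \<and>
         \<not> (wr M j c0 \<noteq> {} \<and> (\<exists>k < j. has_pivot M k (pivot (wr M j c0))))"
proof -
  define b where "b = (\<lambda>c. c \<noteq> {} \<and> (\<exists>k < j. has_pivot M k (pivot c)))"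
  define f where "f = (\<lambda>c. zadd c (the (M (SOME k. k < j \<and> has_pivot M k (pivot c)))))"
  have w: "wr M j c0 = while b f c0" unfolding wr_def b_def f_def ..
  have "(\<lambda>c. c \<in> Q \<and> finite c \<and> \<not> b c) (while b f c0)"
  proof (rule while_rule[where P = "\<lambda>c. c \<in> Q \<and> finite c" and r = "measure (\<lambda>c. if c = {} then 0 else Suc (Max c))"])
    show "c0 \<in> Q \<and> finite c0" using init by simp
    show "wf (measure (\<lambda>c. if c = {} then 0 else Suc (Max c)))" by simp
    show "\<And>s. s \<in> Q \<and> finite s \<Longrightarrow> \<not> b s \<Longrightarrow> s \<in> Q \<and> finite s \<and> \<not> b s" by blast
  next
    fix s assume P: "s \<in> Q \<and> finite s" and bs: "b s"
    define k where "k = (SOME k. k < j \<and> has_pivot M k (pivot s))"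
    have ex: "\<exists>k. k < j \<and> has_pivot M k (pivot s)" using bs unfolding b_def by blast
    have "k < j \<and> has_pivot M k (pivot s)" unfolding k_def using ex by (rule someI_ex)
    then obtain ck where k: "k < j" "M k = Some ck" "ck \<noteq> {}" "pivot ck = pivot s"
      unfolding has_pivot_def by auto
    have fck: "finite ck" using fin k by blast
    have eq: "f s = zadd s ck" using k(2) unfolding f_def k_def[symmetric] by simp
    have sne: "s \<noteq> {}" using bs unfolding b_def by blast
    show "f s \<in> Q \<and> finite (f s)" unfolding eq
      using cl[of s k ck] P sne k fck unfolding zadd_def by auto
    have "zadd s ck = {} \<or> Max (zadd s ck) < Max s"
      using zadd_max[of s ck] P sne k fck unfolding pivot_def by auto
    then show "(f s, s) \<in> measure (\<lambda>c. if c = {} then 0 else Suc (Max c))"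
      unfolding eq using sne by auto
  qed
  then show ?thesis unfolding w b_def by blast
qed

lemma reduce_column_props:
  fixes M :: matrix
  assumes fin: "\<And>k ck. k < j \<Longrightarrow> M k = Some ck \<Longrightarrow> finite ck"
    and cl: "\<And>x k ck. x \<in> Q \<Longrightarrow> finite x \<Longrightarrow> x \<noteq> {} \<Longrightarrow> k < j \<Longrightarrow> M k = Some ck \<Longrightarrow> ck \<noteq> {} \<Longrightarrow>
                pivot ck = pivot x \<Longrightarrow> zadd x ck \<in> Q"
    and init: "c - (I \<inter> Ng) \<in> Q" "finite c"
  shows "reduce_column M I Ng j c \<in> Q \<and> finite (reduce_column M I Ng j c) \<and>
    (reduce_column M I Ng j c \<noteq> {} \<longrightarrow> (\<forall>k<j. \<not> has_pivot M k (pivot (reduce_column M I Ng j c))))"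
proof -
  have e: "reduce_column M I Ng j c = wr M j (c - (I \<inter> Ng))"
    unfolding reduce_column_def wr_def ..
  have "finite (c - (I \<inter> Ng))" using init(2) by simp
  have "wr M j (c - (I \<inter> Ng)) \<in> Q \<and> finite (wr M j (c - (I \<inter> Ng))) \<and>
         \<not> (wr M j (c - (I \<inter> Ng)) \<noteq> {} \<and> (\<exists>k < j. has_pivot M k (pivot (wr M j (c - (I \<inter> Ng))))))"
  proof (rule while_red)
    show "\<And>k ck. k < j \<Longrightarrow> M k = Some ck \<Longrightarrow> finite ck" by (rule fin)
    show "\<And>x k ck. x \<in> Q \<Longrightarrow> finite x \<Longrightarrow> x \<noteq> {} \<Longrightarrow> k < j \<Longrightarrow> M k = Some ck \<Longrightarrow> ck \<noteq> {} \<Longrightarrow>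
                pivot ck = pivot x \<Longrightarrow> zadd x ck \<in> Q" by (rule cl)
  qed (use init \<open>finite (c - (I \<inter> Ng))\<close> in auto)
  then show ?thesis unfolding e by blast
qed


lemma zadd_lower:
  assumes "finite c" "finite cj" "cj \<noteq> {}" "Max cj = l" "l \<in> c" "Max c \<noteq> l"
  shows "zadd c cj \<noteq> {} \<and> finite (zadd c cj) \<and> Max (zadd c cj) = Max c \<and> l \<notin> zadd c cj"
proof -
  have "l \<le> Max c" using assms by simp
  then have lt: "l < Max c" using assms(6) by simp
  have mc: "Max c \<in> c" using assms by (metis Max_in empty_iff)
  have "Max c \<notin> cj" using lt assms(2,4) by (metis Max_ge not_le)
  then have in1: "Max c \<in> zadd c cj" using mc unfolding zadd_def by auto
  have fin: "finite (zadd c cj)" using assms unfolding zadd_def by auto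
  have le: "\<And>x. x \<in> zadd c cj \<Longrightarrow> x \<le> Max c"
  proof -
    fix x assume "x \<in> zadd c cj"
    then have "x \<in> c \<or> x \<in> cj" unfolding zadd_def by auto
    then show "x \<le> Max c"
    proof
      assume "x \<in> cj" then have "x \<le> l" using assms(2,4) by auto
      then show ?thesis using lt by simp
    qed (use assms(1) in simp)
  qed
  have "Max (zadd c cj) = Max c"
    by (rule Max_eqI[OF fin le in1])
  moreover have "l \<in> cj" using assms(2,3,4) by (metis Max_in)
  ultimately show ?thesis using fin in1 assms(5) unfolding zadd_def by auto
qed

lemma rr_some:
  assumes dist: "\<forall>k k' c c'. M k = Some c \<longrightarrow> M k' = Some c' \<longrightarrow> k \<noteq> k' \<longrightarrow> pivot c \<noteq> pivot c'"
    and hp: "has_pivot M j l"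
  shows "(SOME j. has_pivot M j l) = j"
proof (rule some_equality)
  show "has_pivot M j l" by (rule hp)
  fix j' assume "has_pivot M j' l"
  then show "j' = j" using hp dist unfolding has_pivot_def by metis
qed

lemma rr_eq:
  assumes dist: "\<forall>k k' c c'. M k = Some c \<longrightarrow> M k' = Some c' \<longrightarrow> k \<noteq> k' \<longrightarrow> pivot c \<noteq> pivot c'"
    and cols: "\<forall>k c. M k = Some c \<longrightarrow> c \<noteq> {}"
    and hp: "has_pivot M j l"
  shows "remove_row M l i = (if i = j then None else case M i of None \<Rightarrow> None
            | Some c \<Rightarrow> Some (if l \<in> c then zadd c (the (M j)) else c))"
proof -
  have s: "(SOME j. has_pivot M j l) = j" by (rule rr_some[OF dist hp])
  show ?thesis using cols by (simp add: remove_row_def Let_def s split: option.splits)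
qed

lemma rr_props:
  assumes dist: "\<forall>k k' c c'. M k = Some c \<longrightarrow> M k' = Some c' \<longrightarrow> k \<noteq> k' \<longrightarrow> pivot c \<noteq> pivot c'"
    and cols: "\<forall>k c. M k = Some c \<longrightarrow> c \<noteq> {} \<and> finite c"
    and hp: "has_pivot M j l"
    and r: "remove_row M l i = Some c'"
  shows "\<exists>c. M i = Some c \<and> i \<noteq> j \<and> (c' = c \<or> c' = zadd c (the (M j))) \<and> c' \<noteq> {} \<and>
            finite c' \<and> pivot c' = pivot c \<and> l \<notin> c'"
proof -
  obtain cj where cj: "M j = Some cj" "cj \<noteq> {}" "pivot cj = l" using hp unfolding has_pivot_def by auto
  have e: "remove_row M l i = (if i = j then None else case M i of None \<Rightarrow> None
            | Some c \<Rightarrow> Some (if l \<in> c then zadd c (the (M j)) else c))"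
    using rr_eq[OF dist _ hp] cols by blast
  have ij: "i \<noteq> j" using r e by auto
  then obtain c where c: "M i = Some c" using r e by (auto split: option.splits)
  have c'e: "c' = (if l \<in> c then zadd c cj else c)" using r e ij c cj by auto
  have pc: "pivot c \<noteq> l" using dist c cj ij by metis
  show ?thesis
  proof (cases "l \<in> c")
    case True
    have "zadd c cj \<noteq> {} \<and> finite (zadd c cj) \<and> Max (zadd c cj) = Max c \<and> l \<notin> zadd c cj"
      using cols[rule_format, OF c] cols[rule_format, OF cj(1)] cj True pc unfolding pivot_def by (intro zadd_lower) auto
    then show ?thesis using c'e True c ij cj unfolding pivot_def by auto
  next
    case False
    then show ?thesis using c'e c ij cols[rule_format, OF c] by auto
  qed
qed

lemma rr_none:
  assumes dist: "\<forall>k k' c c'. M k = Some c \<longrightarrow> M k' = Some c' \<longrightarrow> k \<noteq> k' \<longrightarrow> pivot c \<noteq> pivot c'"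
    and cols: "\<forall>k c. M k = Some c \<longrightarrow> c \<noteq> {} \<and> finite c"
    and hp: "has_pivot M j l"
  shows "remove_row M l j = None" "i \<noteq> j \<Longrightarrow> M i \<noteq> None \<Longrightarrow> remove_row M l i \<noteq> None"
proof -
  have e: "\<And>i. remove_row M l i = (if i = j then None else case M i of None \<Rightarrow> None
            | Some c \<Rightarrow> Some (if l \<in> c then zadd c (the (M j)) else c))"
    using rr_eq[OF dist _ hp] cols by blast
  show "remove_row M l j = None" using e by simp
  show "i \<noteq> j \<Longrightarrow> M i \<noteq> None \<Longrightarrow> remove_row M l i \<noteq> None" using e by (auto split: option.splits)
qed


locale alg =
  fixes D :: "nat \<Rightarrow> nat set" and str :: "selem list"
  assumes S1: "\<And>p. p < length str \<Longrightarrow> (\<exists>fs. str!p = ADDITION p fs \<and> set fs = D p) \<or> (\<exists>q. str!p = INACTIVE q \<and> D p = {})"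
    and S2: "\<And>p p' q fs. p < p' \<Longrightarrow> p' < length str \<Longrightarrow> str!p = INACTIVE q \<Longrightarrow> str!p' = ADDITION p' fs \<Longrightarrow> q \<notin> set fs"
    and Dfin: "\<And>p. finite (D p)"
begin

definition st :: "nat \<Rightarrow> astate" where
  "st n = foldl process (Map.empty, {}, {}, []) (take n str)"

definition Rc :: "nat \<Rightarrow> nat set" where
  "Rc j = (case str!j of ADDITION j' fs \<Rightarrow> (case st j of (M, I, Ng, out) \<Rightarrow> reduce_column (M(j \<mapsto> set fs)) I Ng j (set fs))
          | INACTIVE q \<Rightarrow> {})"

definition good :: "nat \<Rightarrow> matrix \<Rightarrow> nat set \<Rightarrow> (nat \<times> nat) list \<Rightarrow> bool" where
  "good n M I out \<longleftrightarrow>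
    (\<forall>k c. M k = Some c \<longrightarrow> k < n \<and> c \<noteq> {} \<and> finite c \<and> c \<in> span D n \<and> Rc k \<noteq> {} \<and> pivot c = pivot (Rc k)) \<and>
    (\<forall>k k' c c'. M k = Some c \<longrightarrow> M k' = Some c' \<longrightarrow> k \<noteq> k' \<longrightarrow> pivot c \<noteq> pivot c') \<and>
    (\<forall>j<n. Rc j \<noteq> {} \<longrightarrow> M j \<noteq> None \<or> (pivot (Rc j) \<in> I \<and> (\<forall>k c. M k = Some c \<longrightarrow> pivot (Rc j) \<notin> c))) \<and>
    (\<forall>q\<in>I. \<exists>p<n. str!p = INACTIVE q) \<and>
    set out = {(pivot (Rc j), j) | j. j < n \<and> Rc j \<noteq> {}}"

lemma st_Suc: "n < length str \<Longrightarrow> st (Suc n) = process (st n) (str!n)"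
  unfolding st_def by (simp add: take_Suc_conv_app_nth)

lemma st_0: "st 0 = (Map.empty, {}, {}, [])"
  unfolding st_def by simp

lemma good_0: "good 0 Map.empty {} []"
  unfolding good_def by auto

lemma goodA: "M k = Some c \<Longrightarrow> k < n \<and> c \<noteq> {} \<and> finite c \<and> c \<in> span D n \<and> Rc k \<noteq> {} \<and> pivot c = pivot (Rc k)"
  if "good n M I out"
  using conjunct1[OF that[unfolded good_def]] by blast
lemma goodB: "M k = Some c \<Longrightarrow> M k' = Some c' \<Longrightarrow> k \<noteq> k' \<Longrightarrow> pivot c \<noteq> pivot c'"
  if "good n M I out"
  using conjunct1[OF conjunct2[OF that[unfolded good_def]]] by blast
lemma goodC: "j < n \<Longrightarrow> Rc j \<noteq> {} \<Longrightarrow> M j \<noteq> None \<or> (pivot (Rc j) \<in> I \<and> (\<forall>k c. M k = Some c \<longrightarrow> pivot (Rc j) \<notin> c))"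
  if "good n M I out"
  using conjunct1[OF conjunct2[OF conjunct2[OF that[unfolded good_def]]]] by blast
lemma goodE: "q \<in> I \<Longrightarrow> \<exists>p<n. str!p = INACTIVE q"
  if "good n M I out"
  using conjunct1[OF conjunct2[OF conjunct2[OF conjunct2[OF that[unfolded good_def]]]]] by blast
lemma goodF: "set out = {(pivot (Rc j), j) | j. j < n \<and> Rc j \<noteq> {}}"
  if "good n M I out"
  using conjunct2[OF conjunct2[OF conjunct2[OF conjunct2[OF that[unfolded good_def]]]]] by blast
lemma goodI:
  assumes "\<And>k c. M k = Some c \<Longrightarrow> k < n \<and> c \<noteq> {} \<and> finite c \<and> c \<in> span D n \<and> Rc k \<noteq> {} \<and> pivot c = pivot (Rc k)"
    "\<And>k k' c c'. M k = Some c \<Longrightarrow> M k' = Some c' \<Longrightarrow> k \<noteq> k' \<Longrightarrow> pivot c \<noteq> pivot c'"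
    "\<And>j. j < n \<Longrightarrow> Rc j \<noteq> {} \<Longrightarrow> M j \<noteq> None \<or> (pivot (Rc j) \<in> I \<and> (\<forall>k c. M k = Some c \<longrightarrow> pivot (Rc j) \<notin> c))"
    "\<And>q. q \<in> I \<Longrightarrow> \<exists>p<n. str!p = INACTIVE q"
    "set out = {(pivot (Rc j), j) | j. j < n \<and> Rc j \<noteq> {}}"
  shows "good n M I out"
  unfolding good_def apply (intro conjI)
  subgoal using assms(1) by blast
  subgoal using assms(2) by blast
  subgoal using assms(3) by blast
  subgoal using assms(4) by blast
  subgoal using assms(5) by blast
  done

lemma good_remove:
  assumes g: "good n M I out" and hp: "has_pivot M j l" and lI: "l \<in> I"
  shows "good n (remove_row M l) I out"
proof -
  have dist: "\<forall>k k' c c'. M k = Some c \<longrightarrow> M k' = Some c' \<longrightarrow> k \<noteq> k' \<longrightarrow> pivot c \<noteq> pivot c'"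
    using goodB[OF g] by blast
  have cols: "\<forall>k c. M k = Some c \<longrightarrow> c \<noteq> {} \<and> finite c"
    using goodA[OF g] by blast
  obtain cj where cj: "M j = Some cj" "cj \<noteq> {}" "pivot cj = l" using hp unfolding has_pivot_def by auto
  note P = rr_props[OF dist cols hp]
  note N = rr_none[OF dist cols hp]
  have A: "\<forall>k c. remove_row M l k = Some c \<longrightarrow> k < n \<and> c \<noteq> {} \<and> finite c \<and> c \<in> span D n \<and> Rc k \<noteq> {} \<and> pivot c = pivot (Rc k)"
  proof (intro allI impI)
    fix k c' assume "remove_row M l k = Some c'"
    from P[OF this] obtain c where c: "M k = Some c" "k \<noteq> j" "c' = c \<or> c' = zadd c (the (M j))"
      "c' \<noteq> {}" "finite c'" "pivot c' = pivot c" by blast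
    have gc: "k < n \<and> c \<noteq> {} \<and> finite c \<and> c \<in> span D n \<and> Rc k \<noteq> {} \<and> pivot c = pivot (Rc k)"
      using goodA[OF g c(1)] .
    have "cj \<in> span D n" using goodA[OF g cj(1)] by blast
    then have "c' \<in> span D n" using c(3) gc cj(1) span_zadd by auto
    then show "k < n \<and> c' \<noteq> {} \<and> finite c' \<and> c' \<in> span D n \<and> Rc k \<noteq> {} \<and> pivot c' = pivot (Rc k)"
      using gc c by auto
  qed
  have B: "\<forall>k k' c c'. remove_row M l k = Some c \<longrightarrow> remove_row M l k' = Some c' \<longrightarrow> k \<noteq> k' \<longrightarrow> pivot c \<noteq> pivot c'"
  proof (intro allI impI)
    fix k k' c1 c2 assume a: "remove_row M l k = Some c1" "remove_row M l k' = Some c2" "k \<noteq> k'"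
    from P[OF a(1)] obtain d1 where "M k = Some d1" "pivot c1 = pivot d1" by blast
    moreover from P[OF a(2)] obtain d2 where "M k' = Some d2" "pivot c2 = pivot d2" by blast
    ultimately show "pivot c1 \<noteq> pivot c2" using goodB[OF g _ _ a(3)] by simp
  qed
  have notl: "\<forall>k c. remove_row M l k = Some c \<longrightarrow> l \<notin> c" using P by blast
  have C: "\<forall>j'<n. Rc j' \<noteq> {} \<longrightarrow> remove_row M l j' \<noteq> None \<or>
           (pivot (Rc j') \<in> I \<and> (\<forall>k c. remove_row M l k = Some c \<longrightarrow> pivot (Rc j') \<notin> c))"
  proof (intro allI impI)
    fix j' assume j': "j' < n" "Rc j' \<noteq> {}"
    from goodC[OF g j'] have "M j' \<noteq> None \<or> (pivot (Rc j') \<in> I \<and> (\<forall>k c. M k = Some c \<longrightarrow> pivot (Rc j') \<notin> c))" .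
    then show "remove_row M l j' \<noteq> None \<or>
           (pivot (Rc j') \<in> I \<and> (\<forall>k c. remove_row M l k = Some c \<longrightarrow> pivot (Rc j') \<notin> c))"
    proof
      assume Mj: "M j' \<noteq> None"
      show ?thesis
      proof (cases "j' = j")
        case True
        have "pivot (Rc j) = l" using goodA[OF g cj(1)] cj(3) by simp
        then show ?thesis using True lI notl by auto
      next
        case False then show ?thesis using N(2)[OF False Mj] by blast
      qed
    next
      assume h: "pivot (Rc j') \<in> I \<and> (\<forall>k c. M k = Some c \<longrightarrow> pivot (Rc j') \<notin> c)"
      have "\<forall>k c. remove_row M l k = Some c \<longrightarrow> pivot (Rc j') \<notin> c"
      proof (intro allI impI)
        fix k c' assume "remove_row M l k = Some c'"
        from P[OF this] obtain c where c: "M k = Some c" "c' = c \<or> c' = zadd c (the (M j))" by blast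
        show "pivot (Rc j') \<notin> c'" using h c cj(1) unfolding zadd_def by auto
      qed
      then show ?thesis using h by blast
    qed
  qed
  show ?thesis
  proof (rule goodI)
    show "\<And>q. q \<in> I \<Longrightarrow> \<exists>p<n. str!p = INACTIVE q" using goodE[OF g] .
    show "set out = {(pivot (Rc j), j) | j. j < n \<and> Rc j \<noteq> {}}" using goodF[OF g] .
  qed (use A B C in blast)+
qed

lemma good_extend:
  assumes g: "good n M I out" and R: "Rc n = {}" and I': "I' = I \<or> (I' = insert q I \<and> str!n = INACTIVE q)"
  shows "good (Suc n) M I' out"
proof (rule goodI)
  fix k c assume "M k = Some c"
  from goodA[OF g this] show "k < Suc n \<and> c \<noteq> {} \<and> finite c \<and> c \<in> span D (Suc n) \<and> Rc k \<noteq> {} \<and> pivot c = pivot (Rc k)"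
    using span_mono[of c D n "Suc n"] by auto
next
  fix k k' c c' assume "M k = Some c" "M k' = Some c'" "k \<noteq> k'"
  from goodB[OF g this] show "pivot c \<noteq> pivot c'" .
next
  fix j assume j: "j < Suc n" "Rc j \<noteq> {}"
  then have "j < n" using R less_Suc_eq by auto
  from goodC[OF g this j(2)] have "M j \<noteq> None \<or> (pivot (Rc j) \<in> I \<and> (\<forall>k c. M k = Some c \<longrightarrow> pivot (Rc j) \<notin> c))" .
  moreover have "I \<subseteq> I'" using I' by auto
  ultimately show "M j \<noteq> None \<or> (pivot (Rc j) \<in> I' \<and> (\<forall>k c. M k = Some c \<longrightarrow> pivot (Rc j) \<notin> c))" by blast
next
  fix q' assume "q' \<in> I'"
  then have "q' \<in> I \<or> (q' = q \<and> str!n = INACTIVE q)" using I' by auto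
  then show "\<exists>p<Suc n. str!p = INACTIVE q'"
  proof
    assume "q' \<in> I"
    from goodE[OF g this] show ?thesis using less_SucI by blast
  qed auto
next
  have F: "{(pivot (Rc j), j) | j. j < Suc n \<and> Rc j \<noteq> {}} = {(pivot (Rc j), j) | j. j < n \<and> Rc j \<noteq> {}}"
    using R less_Suc_eq by auto
  show "set out = {(pivot (Rc j), j) | j. j < Suc n \<and> Rc j \<noteq> {}}" using goodF[OF g] F by simp
qed

end


context alg begin

lemma add_fs: "n < length str \<Longrightarrow> str!n = ADDITION j fs \<Longrightarrow> j = n \<and> set fs = D n"
  using S1[of n] by auto

lemma Rc_props:
  assumes n: "n < length str" and a: "str!n = ADDITION n fs" and s: "st n = (M, I, Ng, out)"
    and g: "good n M I out"
  shows "Rc n = reduce_column (M(n \<mapsto> set fs)) I Ng n (set fs)"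
    and "\<exists>x\<in>span D n. Rc n = zadd (D n) x"
    and "finite (Rc n)"
    and "Rc n \<noteq> {} \<Longrightarrow> \<forall>k<n. \<not> has_pivot M k (pivot (Rc n))"
    and "l \<in> I \<Longrightarrow> \<forall>k c. M k = Some c \<longrightarrow> l \<notin> c \<Longrightarrow> l \<notin> Rc n"
proof -
  have sfs: "set fs = D n" using add_fs[OF n a] by simp
  have disj: "\<And>l. l \<in> I \<Longrightarrow> l \<notin> set fs"
  proof -
    fix l assume "l \<in> I"
    from goodE[OF g this] obtain p where "p < n" "str!p = INACTIVE l" by blast
    then show "l \<notin> set fs" using S2[OF _ n _ a] by blast
  qed
  show e1: "Rc n = reduce_column (M(n \<mapsto> set fs)) I Ng n (set fs)"
    unfolding Rc_def using a s by simp
  define Q where "Q = {y. (\<exists>x\<in>span D n. y = zadd (D n) x) \<and> (\<forall>l\<in>I. (\<forall>k c. M k = Some c \<longrightarrow> l \<notin> c) \<longrightarrow> l \<notin> y)}"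
  have Mk: "\<And>k. k < n \<Longrightarrow> (M(n \<mapsto> set fs)) k = M k" by simp
  have hp: "\<And>k l. k < n \<Longrightarrow> has_pivot (M(n \<mapsto> set fs)) k l = has_pivot M k l"
    unfolding has_pivot_def by simp
  have r: "reduce_column (M(n \<mapsto> set fs)) I Ng n (set fs) \<in> Q \<and> finite (reduce_column (M(n \<mapsto> set fs)) I Ng n (set fs)) \<and>
    (reduce_column (M(n \<mapsto> set fs)) I Ng n (set fs) \<noteq> {} \<longrightarrow> (\<forall>k<n. \<not> has_pivot (M(n \<mapsto> set fs)) k (pivot (reduce_column (M(n \<mapsto> set fs)) I Ng n (set fs)))))"
  proof (rule reduce_column_props)
    fix k ck assume "k < n" "(M(n \<mapsto> set fs)) k = Some ck"
    then have "M k = Some ck" using Mk by simp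
    from goodA[OF g this] show "finite ck" by blast
  next
    fix x k ck assume x: "x \<in> Q" and k: "k < n" "(M(n \<mapsto> set fs)) k = Some ck"
    then have Mkc: "M k = Some ck" using Mk by simp
    from goodA[OF g this] have ck: "ck \<in> span D n" by blast
    from x obtain x0 where x0: "x0 \<in> span D n" "x = zadd (D n) x0" unfolding Q_def by blast
    have "zadd x ck = zadd (D n) (zadd x0 ck)" using x0 zadd_assoc by simp
    moreover have "zadd x0 ck \<in> span D n" using x0 ck span_zadd by blast
    moreover have "\<forall>l\<in>I. (\<forall>k c. M k = Some c \<longrightarrow> l \<notin> c) \<longrightarrow> l \<notin> zadd x ck"
      using x Mkc unfolding Q_def zadd_def by blast
    ultimately show "zadd x ck \<in> Q" unfolding Q_def by blast
  next
    have "set fs - (I \<inter> Ng) = D n" using disj sfs by blast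
    moreover have "D n = zadd (D n) {}" unfolding zadd_def by simp
    ultimately show "set fs - (I \<inter> Ng) \<in> Q" unfolding Q_def using span_empty disj by auto
  qed simp
  show "\<exists>x\<in>span D n. Rc n = zadd (D n) x" using r e1 unfolding Q_def by blast
  show "finite (Rc n)" using r e1 by simp
  show "Rc n \<noteq> {} \<Longrightarrow> \<forall>k<n. \<not> has_pivot M k (pivot (Rc n))" using r e1 hp by simp
  show "l \<in> I \<Longrightarrow> \<forall>k c. M k = Some c \<longrightarrow> l \<notin> c \<Longrightarrow> l \<notin> Rc n" using r e1 unfolding Q_def by blast
qed


lemma good_add:
  assumes g: "good n M I out" and c: "c = Rc n" "c \<noteq> {}" "x \<in> span D n" "c = zadd (D n) x" "finite c"
    and np: "\<forall>k<n. \<not> has_pivot M k (pivot c)"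
    and nl: "\<And>l. l \<in> I \<Longrightarrow> \<forall>k c'. M k = Some c' \<longrightarrow> l \<notin> c' \<Longrightarrow> l \<notin> c"
  shows "good (Suc n) (M(n \<mapsto> c)) I (out @ [(pivot c, n)])"
proof (rule goodI)
  have Mn: "M n = None" using goodA[OF g] by (metis less_irrefl not_Some_eq)
  fix k c' assume k: "(M(n \<mapsto> c)) k = Some c'"
  show "k < Suc n \<and> c' \<noteq> {} \<and> finite c' \<and> c' \<in> span D (Suc n) \<and> Rc k \<noteq> {} \<and> pivot c' = pivot (Rc k)"
  proof (cases "k = n")
    case True
    then have "c' = c" using k by simp
    moreover have "c \<in> span D (Suc n)"
      using c(3,4) span_zadd[OF span_gen[of n "Suc n" D] span_mono[OF c(3), of "Suc n"]] by simp
    ultimately show ?thesis using True c by simp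
  next
    case False
    then have "M k = Some c'" using k by simp
    from goodA[OF g this] show ?thesis using span_mono[of c' D n "Suc n"] by auto
  qed
next
  fix k k' c1 c2 assume a: "(M(n \<mapsto> c)) k = Some c1" "(M(n \<mapsto> c)) k' = Some c2" "k \<noteq> k'"
  have side: "\<And>k c1. k \<noteq> n \<Longrightarrow> M k = Some c1 \<Longrightarrow> pivot c1 \<noteq> pivot c"
  proof -
    fix k c1 assume "k \<noteq> n" "M k = Some c1"
    from goodA[OF g this(2)] have "k < n" "c1 \<noteq> {}" by auto
    then show "pivot c1 \<noteq> pivot c" using np \<open>M k = Some c1\<close> unfolding has_pivot_def by blast
  qed
  show "pivot c1 \<noteq> pivot c2"
  proof (cases "k = n")
    case True then show ?thesis using a side[of k' c2] by auto
  next
    case False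
    show ?thesis
    proof (cases "k' = n")
      case True then show ?thesis using a False side[of k c1] by auto
    next
      case False2: False
      then show ?thesis using a False goodB[OF g] by auto
    qed
  qed
next
  fix j assume j: "j < Suc n" "Rc j \<noteq> {}"
  show "(M(n \<mapsto> c)) j \<noteq> None \<or> (pivot (Rc j) \<in> I \<and> (\<forall>k c'. (M(n \<mapsto> c)) k = Some c' \<longrightarrow> pivot (Rc j) \<notin> c'))"
  proof (cases "j = n")
    case True then show ?thesis by simp
  next
    case False
    then have "j < n" using j by simp
    from goodC[OF g this j(2)] show ?thesis
    proof
      assume "M j \<noteq> None" then show ?thesis using False by simp
    next
      assume h: "pivot (Rc j) \<in> I \<and> (\<forall>k c. M k = Some c \<longrightarrow> pivot (Rc j) \<notin> c)"
      then have "pivot (Rc j) \<notin> c" using nl by blast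
      then show ?thesis using h by auto
    qed
  qed
next
  fix q assume "q \<in> I"
  from goodE[OF g this] show "\<exists>p<Suc n. str!p = INACTIVE q" using less_SucI by blast
next
  have F: "{(pivot (Rc j), j) | j. j < Suc n \<and> Rc j \<noteq> {}} = insert (pivot c, n) {(pivot (Rc j), j) | j. j < n \<and> Rc j \<noteq> {}}"
    using c(1,2) less_Suc_eq by auto
  show "set (out @ [(pivot c, n)]) = {(pivot (Rc j), j) | j. j < Suc n \<and> Rc j \<noteq> {}}" using goodF[OF g] F by simp
qed

lemma good_step:
  assumes n: "n < length str" and s: "st n = (M, I, Ng, out)" and g: "good n M I out"
    and s': "st (Suc n) = (M', I', Ng', out')"
  shows "good (Suc n) M' I' out'"
proof -
  have ps: "process (M, I, Ng, out) (str!n) = (M', I', Ng', out')" using s s' st_Suc[OF n] by simp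
  from S1[OF n] show ?thesis
  proof
    assume "\<exists>fs. str!n = ADDITION n fs \<and> set fs = D n"
    then obtain fs where a: "str!n = ADDITION n fs" by blast
    note RP = Rc_props[OF n a s g]
    obtain x where x: "x \<in> span D n" "Rc n = zadd (D n) x" using RP(2) by blast
    show ?thesis
    proof (cases "Rc n = {}")
      case True
      have Mn: "M(n := None) = M" using goodA[OF g] by (metis fun_upd_triv less_irrefl not_Some_eq)
      have "(M', I', Ng', out') = (M, I, Ng, out)" using ps a True RP(1) Mn by simp
      then show ?thesis using good_extend[OF g True, of I] by simp
    next
      case False
      define c where "c = Rc n"
      have ga: "good (Suc n) (M(n \<mapsto> c)) I (out @ [(pivot c, n)])"
        by (rule good_add[OF g c_def]) (use False x RP(3,4,5) c_def in auto)
      have pe: "(M', I', Ng', out') = (if pivot c \<in> I then remove_row (M(n \<mapsto> c)) (pivot c) else M(n \<mapsto> c),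
                  I, insert n Ng, out @ [(pivot c, n)])"
      proof -
        have "process (M, I, Ng, out) (ADDITION n fs) = (if pivot c \<in> I then remove_row (M(n \<mapsto> c)) (pivot c) else M(n \<mapsto> c),
                  I, insert n Ng, out @ [(pivot c, n)])"
          using False unfolding c_def RP(1) by (simp add: Let_def)
        moreover have "(M', I', Ng', out') = process (M, I, Ng, out) (ADDITION n fs)"
          using ps[symmetric] unfolding a .
        ultimately show ?thesis by simp
      qed
      show ?thesis
      proof (cases "pivot c \<in> I")
        case True
        have "has_pivot (M(n \<mapsto> c)) n (pivot c)" unfolding has_pivot_def using False c_def by simp
        from good_remove[OF ga this True] show ?thesis using pe True by simp
      next
        case False
        then show ?thesis using pe ga by simp
      qed
    qed
  next
    assume "\<exists>q. str!n = INACTIVE q \<and> D n = {}"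
    then obtain q where a: "str!n = INACTIVE q" by blast
    have R: "Rc n = {}" unfolding Rc_def using a by simp
    have ge: "good (Suc n) M (insert q I) out" using good_extend[OF g R, of "insert q I" q] a by simp
    have pe: "(M', I', Ng', out') = (if \<exists>j. has_pivot M j q then remove_row M q else M, insert q I, Ng, out)"
      using ps a by simp
    show ?thesis
    proof (cases "\<exists>j. has_pivot M j q")
      case True
      then obtain j where "has_pivot M j q" by blast
      from good_remove[OF ge this] show ?thesis using pe True by simp
    next
      case False then show ?thesis using pe ge by simp
    qed
  qed
qed

lemma good_all: "n \<le> length str \<Longrightarrow> st n = (M, I, Ng, out) \<Longrightarrow> good n M I out"
proof (induction n arbitrary: M I Ng out)
  case 0
  then show ?case using st_0 good_0 by simp
next
  case (Suc n)
  obtain M0 I0 Ng0 out0 where s: "st n = (M0, I0, Ng0, out0)" by (cases "st n") auto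
  have "good n M0 I0 out0" using Suc.IH[OF _ s] Suc.prems by simp
  then show ?case using good_step[OF _ s _ Suc.prems(2)] Suc.prems(1) by simp
qed

lemma pivots_distinct:
  assumes jk: "j < k" "k < length str" and R: "Rc j \<noteq> {}" "Rc k \<noteq> {}"
  shows "pivot (Rc j) \<noteq> pivot (Rc k)"
proof -
  obtain fs where a: "str!k = ADDITION k fs"
  proof (cases "str!k")
    case (ADDITION j' fs)
    then show ?thesis using add_fs[OF jk(2) ADDITION] that by simp
  next
    case (INACTIVE q)
    then show ?thesis using R(2) unfolding Rc_def by simp
  qed
  obtain M I Ng out where s: "st k = (M, I, Ng, out)" by (cases "st k") auto
  have g: "good k M I out" using good_all[OF _ s] jk by simp
  note RP = Rc_props[OF jk(2) a s g]
  have pin: "pivot (Rc k) \<in> Rc k" unfolding pivot_def using RP(3) R(2) by (rule Max_in)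
  from goodC[OF g jk(1) R(1)] show ?thesis
  proof
    assume "M j \<noteq> None"
    then obtain cj where cj: "M j = Some cj" by blast
    from goodA[OF g cj] have "cj \<noteq> {}" "pivot cj = pivot (Rc j)" by auto
    then have "has_pivot M j (pivot (Rc j))" using cj unfolding has_pivot_def by simp
    then show ?thesis using RP(4)[OF R(2)] jk(1) by auto
  next
    assume h: "pivot (Rc j) \<in> I \<and> (\<forall>k c. M k = Some c \<longrightarrow> pivot (Rc j) \<notin> c)"
    then have "pivot (Rc j) \<notin> Rc k" using RP(5) by blast
    then show ?thesis using pin by auto
  qed
qed

theorem alg_correct:
  "\<exists>R. is_reduction (length str) D R \<and> set (run_algorithm str) = pivot_pairs (length str) R"
proof (intro exI conjI)
  obtain M I Ng out where s: "st (length str) = (M, I, Ng, out)" by (cases "st (length str)") auto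
  have g: "good (length str) M I out" using good_all[OF _ s] by simp
  have "run_algorithm str = out" using s unfolding run_algorithm_def st_def by simp
  then show "set (run_algorithm str) = pivot_pairs (length str) Rc"
    using goodF[OF g] unfolding pivot_pairs_def by simp
  show "is_reduction (length str) D Rc"
    unfolding is_reduction_def
  proof (intro conjI allI impI)
    fix j assume j: "j < length str"
    show "\<exists>S. S \<subseteq> {..<j} \<and> Rc j = D j \<union> zsum S D - (D j \<inter> zsum S D)"
    proof (cases "str!j")
      case (ADDITION j' fs)
      then have a: "str!j = ADDITION j fs" using add_fs[OF j ADDITION] by simp
      obtain M I Ng out where s: "st j = (M, I, Ng, out)" by (cases "st j") auto
      have g: "good j M I out" using good_all[OF _ s] j by simp
      obtain x where x: "x \<in> span D j" "Rc j = zadd (D j) x" using Rc_props(2)[OF j a s g] by blast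
      obtain S where S: "S \<subseteq> {..<j}" "x = zsum S D" using x(1) unfolding span_def by blast
      show ?thesis using x(2) S unfolding zadd_def by blast
    next
      case (INACTIVE q)
      then have "Rc j = {}" "D j = {}" using S1[OF j] unfolding Rc_def by auto
      then show ?thesis by (intro exI[of _ "{}"]) simp
    qed
  next
    fix j k assume "j < length str" "k < length str" "j \<noteq> k \<and> Rc j \<noteq> {} \<and> Rc k \<noteq> {}"
    then show "pivot (Rc j) \<noteq> pivot (Rc k)"
      using pivots_distinct[of j k] pivots_distinct[of k j] by (metis linorder_neqE_nat)
  qed
qed

end


lemma blocks_order:
  fixes a b :: "nat \<Rightarrow> 'v set list"
  assumes cond: "\<And>i i' \<tau> \<sigma>. i < i' \<Longrightarrow> i' < m \<Longrightarrow> \<tau> \<in> set (b i) \<Longrightarrow> \<sigma> \<in> set (a i') \<Longrightarrow> \<not> is_facet \<tau> \<sigma>"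
    and xs: "xs = concat (map (\<lambda>i. map LAdd (a i) @ map LInact (b i)) [0..<m])"
    and p: "p < p'" "p' < length xs" "xs!p = LInact \<tau>" "xs!p' = LAdd \<sigma>"
  shows "\<not> is_facet \<tau> \<sigma>"
  using cond xs p
proof (induction m arbitrary: xs p p')
  case 0
  then show ?case by simp
next
  case (Suc m)
  define ys where "ys = concat (map (\<lambda>i. map LAdd (a i) @ map LInact (b i)) [0..<m])"
  define B where "B = map LAdd (a m) @ map LInact (b m)"
  have xs: "xs = ys @ B" using Suc.prems(2) unfolding ys_def B_def by simp
  have IH: "\<And>p p'. p < p' \<Longrightarrow> p' < length ys \<Longrightarrow> ys!p = LInact \<tau> \<Longrightarrow> ys!p' = LAdd \<sigma> \<Longrightarrow> \<not> is_facet \<tau> \<sigma>"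
    using Suc.IH[OF _ ys_def] Suc.prems(1) by (meson less_SucI)
  show ?case
  proof (cases "p' < length ys")
    case True
    then show ?thesis using IH[of p p'] Suc.prems(3-6) xs by (simp add: nth_append)
  next
    case False
    define k' where "k' = p' - length ys"
    have Bk': "B!k' = LAdd \<sigma>" "k' < length B" using Suc.prems(4,6) False xs unfolding k'_def by (auto simp: nth_append)
    then have k'a: "k' < length (a m)" "\<sigma> \<in> set (a m)" unfolding B_def
      by (auto simp: nth_append split: if_splits)
    show ?thesis
    proof (cases "p < length ys")
      case True
      then have "LInact \<tau> \<in> set ys" using Suc.prems(5) xs by (metis nth_append nth_mem)
      then obtain i where "i < m" "\<tau> \<in> set (b i)" unfolding ys_def by auto
      then show ?thesis using Suc.prems(1)[of i m] k'a by simp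
    next
      case False2: False
      define k where "k = p - length ys"
      have "B!k = LInact \<tau>" "k < length B" using Suc.prems(3,4,5) False2 xs unfolding k_def by (auto simp: nth_append)
      then have "k \<ge> length (a m)" unfolding B_def by (auto simp: nth_append split: if_splits)
      moreover have "k < k'" using Suc.prems(3) False2 unfolding k_def k'_def by simp
      ultimately show ?thesis using k'a by simp
    qed
  qed
qed


lemma cstates_Suc: "i < length ops \<Longrightarrow> cstates ops (Suc i) = cstep (cstates ops i) (ops!i)"
  unfolding cstates_def by (simp add: take_Suc_conv_app_nth)

definition ca :: "'v set set \<Rightarrow> 'v set \<Rightarrow> 'v \<Rightarrow> 'v \<Rightarrow> 'v" where
  "ca Kh A u v = (if card (act_star Kh A u) \<le> card (act_star Kh A v) then u else v)"
definition cb :: "'v set set \<Rightarrow> 'v set \<Rightarrow> 'v \<Rightarrow> 'v \<Rightarrow> 'v" where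
  "cb Kh A u v = (if card (act_star Kh A u) \<le> card (act_star Kh A v) then v else u)"

lemma cstep_Contr: "cstep (K, Kh, A) (Contr u v) =
   ((\<lambda>\<tau>. (\<lambda>x. if x = ca Kh A u v then cb Kh A u v else x) ` \<tau>) ` K,
    Kh \<union> {insert (cb Kh A u v) \<tau> | \<tau>. \<tau> \<in> act_star Kh A (ca Kh A u v)},
    A - {ca Kh A u v})"
  unfolding ca_def cb_def by (cases "card (act_star Kh A u) \<le> card (act_star Kh A v)") (simp_all add: Let_def)

lemma cab: "cb Kh A u v \<in> {u, v}" "u \<noteq> v \<Longrightarrow> ca Kh A u v \<noteq> cb Kh A u v"
  unfolding ca_def cb_def by auto

lemma cstep_mono:
  assumes "cstep (K, Kh, A) op = (K', Kh', A')"
  shows "Kh \<subseteq> Kh'" "x \<in> \<Union>Kh \<Longrightarrow> x \<notin> A \<Longrightarrow> x \<notin> A'"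
proof -
  have "Kh \<subseteq> Kh' \<and> (x \<in> \<Union>Kh \<longrightarrow> x \<notin> A \<longrightarrow> x \<notin> A')"
  proof (cases op)
    case (Incl s)
    then show ?thesis using assms by auto
  next
    case (Contr u v)
    have "Kh' = Kh \<union> {insert (cb Kh A u v) \<tau> | \<tau>. \<tau> \<in> act_star Kh A (ca Kh A u v)}" "A' = A - {ca Kh A u v}"
      using assms[unfolded Contr cstep_Contr] by auto
    then show ?thesis by auto
  qed
  then show "Kh \<subseteq> Kh'" "x \<in> \<Union>Kh \<Longrightarrow> x \<notin> A \<Longrightarrow> x \<notin> A'" by auto
qed

lemma cstep_inv:
  assumes "valid_op (K, Kh, A) op" "\<Union>K \<subseteq> A" "cstep (K, Kh, A) op = (K', Kh', A')"
  shows "\<Union>K' \<subseteq> A'"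
proof (cases op)
  case (Incl s)
  have e: "K' = K \<union> {s}" "Kh' = Kh \<union> {s}" "A' = A \<union> (s - \<Union>Kh)"
    using assms(3)[unfolded Incl] by auto
  have "\<forall>x\<in>s. x \<notin> \<Union>K \<longrightarrow> x \<notin> \<Union>Kh" using assms(1)[unfolded Incl] by simp
  then show ?thesis using e assms(2) by blast
next
  case (Contr u v)
  let ?a = "ca Kh A u v" and ?b = "cb Kh A u v"
  have vo: "u \<noteq> v" "{u} \<in> K" "{v} \<in> K" using assms(1)[unfolded Contr] by auto
  have ab: "?a \<noteq> ?b" "{?b} \<in> K" using cab[where Kh=Kh and A=A and u=u and v=v] vo by auto
  have K': "K' = (\<lambda>\<tau>. (\<lambda>x. if x = ?a then ?b else x) ` \<tau>) ` K" "A' = A - {?a}"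
    using assms(3)[unfolded Contr cstep_Contr] by auto
  have bA: "?b \<in> A" using ab assms(2) by auto
  show ?thesis
  proof
    fix y assume "y \<in> \<Union>K'"
    then obtain \<tau> x where tx: "\<tau> \<in> K" "x \<in> \<tau>" "y = (if x = ?a then ?b else x)" unfolding K' by auto
    have "x \<in> A" using tx assms(2) by auto
    then show "y \<in> A'" unfolding K' using tx bA ab(1) by auto
  qed
qed

lemma cstep_new:
  assumes "valid_op (K, Kh, A) op" "\<Union>K \<subseteq> A" "cstep (K, Kh, A) op = (K', Kh', A')"
    and "\<sigma> \<in> Kh' - Kh" "y \<in> \<sigma>"
  shows "y \<in> A \<or> y \<notin> \<Union>Kh"
proof (cases op)
  case (Incl s)
  have e: "Kh' = Kh \<union> {s}"
    using assms(3)[unfolded Incl] by auto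
  have "\<forall>x\<in>s. x \<notin> \<Union>K \<longrightarrow> x \<notin> \<Union>Kh" using assms(1)[unfolded Incl] by simp
  then show ?thesis using e assms(2,4,5) by blast
next
  case (Contr u v)
  let ?a = "ca Kh A u v" and ?b = "cb Kh A u v"
  have vo: "u \<noteq> v" "{u} \<in> K" "{v} \<in> K" using assms(1)[unfolded Contr] by auto
  have ab: "{?b} \<in> K" using cab[where Kh=Kh and A=A and u=u and v=v] vo by auto
  have Kh': "Kh' = Kh \<union> {insert ?b \<tau> | \<tau>. \<tau> \<in> act_star Kh A ?a}"
    using assms(3)[unfolded Contr cstep_Contr] by auto
  then obtain \<tau> where "\<sigma> = insert ?b \<tau>" "\<tau> \<in> act_star Kh A ?a" using assms(4) by auto
  moreover have "?b \<in> A" using ab assms(2) by auto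
  ultimately show ?thesis using assms(5) unfolding act_star_def is_active_def by auto
qed

lemma vt: "valid_tower ops \<Longrightarrow> i < length ops \<Longrightarrow> valid_op (cstates ops i) (ops!i)"
  unfolding valid_tower_def by blast

lemma inv_all: "valid_tower ops \<Longrightarrow> i \<le> length ops \<Longrightarrow> \<Union>(fst (cstates ops i)) \<subseteq> Act ops i"
proof (induction i)
  case 0
  then show ?case unfolding cstates_def Act_def by simp
next
  case (Suc i)
  obtain K Kh A where s: "cstates ops i = (K, Kh, A)" by (cases "cstates ops i") auto
  obtain K' Kh' A' where s': "cstates ops (Suc i) = (K', Kh', A')" by (cases "cstates ops (Suc i)") auto
  have i: "i < length ops" using Suc.prems by simp
  have v: "valid_op (K, Kh, A) (ops!i)" using vt[OF Suc.prems(1) i] s by simp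
  have "\<Union>K \<subseteq> A" using Suc.IH Suc.prems s unfolding Act_def by simp
  from cstep_inv[OF v this] show ?case using s s' cstates_Suc[OF i] unfolding Act_def by simp
qed

lemma inactive_persist:
  assumes "x \<in> \<Union>(Khat ops s)" "x \<notin> Act ops s" "s \<le> t" "t \<le> length ops"
  shows "x \<in> \<Union>(Khat ops t) \<and> x \<notin> Act ops t"
  using assms(3,4)
proof (induction t)
  case 0 then show ?case using assms by simp
next
  case (Suc t)
  show ?case
  proof (cases "s = Suc t")
    case True then show ?thesis using assms by simp
  next
    case False
    then have IH: "x \<in> \<Union>(Khat ops t) \<and> x \<notin> Act ops t" using Suc by simp
    obtain K Kh A where s: "cstates ops t = (K, Kh, A)" by (cases "cstates ops t") auto
    obtain K' Kh' A' where s': "cstates ops (Suc t) = (K', Kh', A')" by (cases "cstates ops (Suc t)") auto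
    have e: "cstep (K, Kh, A) (ops!t) = (K', Kh', A')" using s s' cstates_Suc[of t ops] Suc.prems by simp
    note m = cstep_mono[OF e]
    have "x \<in> \<Union>Kh" "x \<notin> A" using IH s unfolding Khat_def Act_def by auto
    then have "x \<in> \<Union>Kh'" "x \<notin> A'" using m by auto
    then show ?thesis using s' unfolding Khat_def Act_def by simp
  qed
qed

lemma new_simplex:
  assumes v: "valid_tower ops" and i: "i < length ops"
    and \<sigma>: "\<sigma> \<in> Khat ops (Suc i) - Khat ops i" "y \<in> \<sigma>"
  shows "y \<in> Act ops i \<or> y \<notin> \<Union>(Khat ops i)"
proof -
  obtain K Kh A where s: "cstates ops i = (K, Kh, A)" by (cases "cstates ops i") auto
  obtain K' Kh' A' where s': "cstates ops (Suc i) = (K', Kh', A')" by (cases "cstates ops (Suc i)") auto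
  have e: "cstep (K, Kh, A) (ops!i) = (K', Kh', A')" using s s' cstates_Suc[OF i] by simp
  have vo: "valid_op (K, Kh, A) (ops!i)" using vt[OF v i] s by simp
  have "\<Union>(fst (cstates ops i)) \<subseteq> Act ops i" using inv_all[OF v] i by simp
  then have "\<Union>K \<subseteq> A" using s unfolding Act_def by simp
  from cstep_new[OF vo this e] show ?thesis using \<sigma> s s' unfolding Khat_def Act_def by auto
qed

lemma geometric:
  assumes v: "valid_tower ops" and ii: "i < i'" "i' < length ops"
    and \<tau>: "\<tau> \<in> newly_inactive ops i" and \<sigma>: "\<sigma> \<in> Khat ops (Suc i') - Khat ops i'"
  shows "\<not> is_facet \<tau> \<sigma>"
proof
  assume f: "is_facet \<tau> \<sigma>"
  from \<tau> obtain x where x: "x \<in> \<tau>" "x \<notin> Act ops (Suc i)" "\<tau> \<in> Khat ops (Suc i)"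
    unfolding newly_inactive_def is_active_def by auto
  have "x \<in> \<Union>(Khat ops (Suc i))" using x by auto
  from inactive_persist[OF this x(2)] ii have p: "x \<in> \<Union>(Khat ops i') \<and> x \<notin> Act ops i'" by simp
  have "x \<in> \<sigma>" using f x unfolding is_facet_def by auto
  from new_simplex[OF v ii(2) \<sigma> this] p show False by simp
qed


theorem proposition17:
  fixes ops :: "'v tower_op list" and ls :: "'v lelem list" and str :: "selem list"
  assumes "valid_tower ops"
    and "labelled_stream ops ls"
    and "stream_of ls str"
  shows "\<exists>R. is_reduction (length ls) (boundary ls) R \<and>
             set (run_algorithm str) = pivot_pairs (length ls) R"
proof -
  note v = assms(1)
  obtain adds inacts :: "nat \<Rightarrow> 'v set list" where
    ai: "\<forall>i < length ops.
           distinct (adds i) \<and> set (adds i) = Khat ops (Suc i) - Khat ops i \<and>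
           sorted (map card (adds i)) \<and>
           distinct (inacts i) \<and> set (inacts i) = newly_inactive ops i"
    and lsd: "ls = concat (map (\<lambda>i. map LAdd (adds i) @ map LInact (inacts i)) [0..<length ops])"
    using assms(2) unfolding labelled_stream_def by blast
  have P: "\<And>p p' \<tau> \<sigma>. p < p' \<Longrightarrow> p' < length ls \<Longrightarrow> ls!p = LInact \<tau> \<Longrightarrow> ls!p' = LAdd \<sigma> \<Longrightarrow> \<not> is_facet \<tau> \<sigma>"
  proof -
    fix p p' \<tau> \<sigma> assume h: "p < p'" "p' < length ls" "ls!p = LInact \<tau>" "ls!p' = LAdd \<sigma>"
    show "\<not> is_facet \<tau> \<sigma>"
    proof (rule blocks_order[OF _ lsd h])
      fix i i' \<tau>' \<sigma>' assume "i < i'" "i' < length ops" "\<tau>' \<in> set (inacts i)" "\<sigma>' \<in> set (adds i')"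
      then show "\<not> is_facet \<tau>' \<sigma>'" using geometric[OF v, of i i' \<tau>' \<sigma>'] ai by auto
    qed
  qed
  have so: "length str = length ls"
    "\<And>p \<sigma>. p < length ls \<Longrightarrow> ls ! p = LAdd \<sigma> \<Longrightarrow>
           (\<exists>fs. str ! p = ADDITION p fs \<and> distinct fs \<and>
                 set fs = {q. q < length ls \<and> (\<exists>\<tau>. ls ! q = LAdd \<tau> \<and> is_facet \<tau> \<sigma>)})"
    "\<And>p \<sigma>. p < length ls \<Longrightarrow> ls ! p = LInact \<sigma> \<Longrightarrow>
           (\<exists>q < length ls. ls ! q = LAdd \<sigma> \<and> str ! p = INACTIVE q)"
    using assms(3) unfolding stream_of_def by blast+
  interpret alg "boundary ls" str
  proof
    fix p assume p: "p < length str"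
    show "(\<exists>fs. str!p = ADDITION p fs \<and> set fs = boundary ls p) \<or> (\<exists>q. str!p = INACTIVE q \<and> boundary ls p = {})"
    proof (cases "ls!p")
      case (LAdd \<sigma>)
      then obtain fs where "str ! p = ADDITION p fs"
          "set fs = {q. q < length ls \<and> (\<exists>\<tau>. ls ! q = LAdd \<tau> \<and> is_facet \<tau> \<sigma>)}"
        using so(2)[of p \<sigma>] p so(1) by auto
      moreover have "boundary ls p = {q. q < length ls \<and> (\<exists>\<tau>. ls ! q = LAdd \<tau> \<and> is_facet \<tau> \<sigma>)}"
        unfolding boundary_def using LAdd p so(1) by auto
      ultimately show ?thesis by auto
    next
      case (LInact \<sigma>)
      then obtain q where "str ! p = INACTIVE q" using so(3)[of p \<sigma>] p so(1) by auto
      moreover have "boundary ls p = {}" unfolding boundary_def using LInact by auto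
      ultimately show ?thesis by auto
    qed
  next
    fix p p' q fs assume h: "p < p'" "p' < length str" "str!p = INACTIVE q" "str!p' = ADDITION p' fs"
    have pl: "p < length ls" "p' < length ls" using h so(1) by auto
    obtain \<tau> where t: "ls!p = LInact \<tau>"
    proof (cases "ls!p")
      case (LAdd x) then show ?thesis using so(2)[OF pl(1) LAdd] h(3) by auto
    qed
    obtain \<sigma> where s: "ls!p' = LAdd \<sigma>"
    proof (cases "ls!p'")
      case (LInact x) then show ?thesis using so(3)[OF pl(2) LInact] h(4) by auto
    qed
    have q: "ls!q = LAdd \<tau>" using so(3)[OF pl(1) t] h(3) by auto
    have fs: "set fs = {q. q < length ls \<and> (\<exists>\<tau>. ls ! q = LAdd \<tau> \<and> is_facet \<tau> \<sigma>)}"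
      using so(2)[OF pl(2) s] h(4) by auto
    have "\<not> is_facet \<tau> \<sigma>" using P[OF h(1) pl(2) t s] .
    then show "q \<notin> set fs" using fs q by auto
  next
    fix p show "finite (boundary ls p)"
      by (rule finite_subset[of _ "{..<length ls}"]) (auto simp: boundary_def)
  qed
  show ?thesis using alg_correct so(1) by simp
qed

end
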